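(* For every integer $k\ge 2$, every finite graph $G$ with maximum degree $\Delta\ge 1$ has a star-$k$ coloring with at most $C_{2k-2}\,k^{\frac{1}{2k-2}}\,\Delta^{\frac{2k-1}{2k-2}}+\Delta$ colors, where $C_\ell=\ell\,(\ell-1)^{\frac1\ell-1}$.
   Context: A star-$k$ coloring of a graph is a proper vertex-coloring such that every path on $2k$ vertices contains at least three colors. *)

theory Defs
  imports Complex_Main
begin

definition finite_simple_graph :: "'a set \<Rightarrow> ('a \<Rightarrow> 'a \<Rightarrow> bool) \<Rightarrow> bool" where
  "finite_simple_graph V E \<longleftrightarrow> finite V \<and> (\<forall>u v. E u v \<longrightarrow> u \<in> V \<and> v \<in> V)
     \<and> (\<forall>u v. E u v \<longrightarrow> E v u) \<and> (\<forall>v. \<not> E v v)"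

definition degree :: "'a set \<Rightarrow> ('a \<Rightarrow> 'a \<Rightarrow> bool) \<Rightarrow> 'a \<Rightarrow> nat" where
  "degree V E v = card {u \<in> V. E v u}"

definition max_degree :: "'a set \<Rightarrow> ('a \<Rightarrow> 'a \<Rightarrow> bool) \<Rightarrow> nat" where
  "max_degree V E = Max (degree V E ` V)"

definition is_path :: "'a set \<Rightarrow> ('a \<Rightarrow> 'a \<Rightarrow> bool) \<Rightarrow> 'a list \<Rightarrow> bool" where
  "is_path V E p \<longleftrightarrow> p \<noteq> [] \<and> set p \<subseteq> V \<and> distinct p
     \<and> (\<forall>i. Suc i < length p \<longrightarrow> E (p ! i) (p ! Suc i))"

definition proper_coloring :: "'a set \<Rightarrow> ('a \<Rightarrow> 'a \<Rightarrow> bool) \<Rightarrow> ('a \<Rightarrow> 'c) \<Rightarrow> bool" where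
  "proper_coloring V E c \<longleftrightarrow> (\<forall>u\<in>V. \<forall>v\<in>V. E u v \<longrightarrow> c u \<noteq> c v)"

definition star_k_coloring :: "nat \<Rightarrow> 'a set \<Rightarrow> ('a \<Rightarrow> 'a \<Rightarrow> bool) \<Rightarrow> ('a \<Rightarrow> 'c) \<Rightarrow> bool" where
  "star_k_coloring k V E c \<longleftrightarrow> proper_coloring V E c \<and>
     (\<forall>p. is_path V E p \<and> length p = 2 * k \<longrightarrow> card (c ` set p) \<ge> 3)"

definition C_const :: "nat \<Rightarrow> real" where
  "C_const l = real l * (real l - 1) powr (1 / real l - 1)"

end

theory Submission
  imports Defs
begin


lemma numeric:
  fixes k D :: nat
  assumes k: "k \<ge> 2" and D: "D \<ge> 1"
  defines "F \<equiv> C_const (2*k-2) * real k powr (1/real(2*k-2)) * real D powr (real(2*k-1)/real(2*k-2))"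
  shows "F \<ge> 1 \<and> (\<exists>\<beta>>0. \<beta> + real (k*D*(D-1)^(2*k-2)) / \<beta>^(2*k-3) \<le> of_int \<lfloor>F\<rfloor>)"
proof -
  define l where "l = 2*k-2"
  define m where "m = 2*k-3"
  have lm: "l = Suc m" "m \<ge> 1" using k by (auto simp: l_def m_def)
  have rl: "real (2*k-2) = real m + 1" "real (2*k-1) = real m + 2" using k by (auto simp: m_def)
  have mpos: "real m \<ge> 1" using lm by simp
  have C: "C_const (2*k-2) = (real m + 1) * real m powr (1/(real m + 1) - 1)"
    unfolding C_const_def rl by simp
  have C1: "C_const (2*k-2) \<ge> 1"
  proof -
    have "real m powr (1/(real m + 1) - 1) \<ge> real m powr (-1)"
      by (rule powr_mono) (use mpos in auto)
    also have "real m powr (-1) = 1 / real m" using mpos by (simp add: powr_minus_divide)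
    finally have "(real m + 1) * real m powr (1/(real m + 1) - 1) \<ge> (real m + 1) * (1/ real m)"
      by (intro mult_left_mono) auto
    moreover have "(real m + 1) * (1/ real m) \<ge> 1" using mpos by (simp add: field_simps)
    ultimately show ?thesis unfolding C by linarith
  qed
  have K1: "real k powr (1/real(2*k-2)) \<ge> 1" using k by (intro ge_one_powr_ge_zero) auto
  have DD: "real D powr (real(2*k-1)/real(2*k-2)) \<ge> real D"
  proof -
    have "real D powr 1 \<le> real D powr (real(2*k-1)/real(2*k-2))"
      by (rule powr_mono) (use D k rl in auto)
    then show ?thesis using D by simp
  qed
  have FD: "F \<ge> real D"
  proof -
    have "1 * 1 * real D \<le> C_const (2*k-2) * real k powr (1/real(2*k-2)) * real D powr (real(2*k-1)/real(2*k-2))"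
      by (intro mult_mono C1 K1 DD) (use C1 in auto)
    then show ?thesis unfolding F_def by simp
  qed
  have F1: "F \<ge> 1" using FD D by simp
  show ?thesis
  proof (cases "D = 1")
    case True
    then have z: "real (k*D*(D-1)^(2*k-2)) = 0" using k by simp
    have "(1::real) \<le> of_int \<lfloor>F\<rfloor>" using F1 by (simp add: le_floor_iff)
    then have "1 + real (k*D*(D-1)^(2*k-2)) / 1^(2*k-3) \<le> of_int \<lfloor>F\<rfloor>" by (simp only: z)
    then show ?thesis using F1 by (intro conjI exI[of _ 1]) auto
  next
    case False
    hence D2: "D \<ge> 2" using D by simp
    define g where "g = (real D - 1) / real D"
    define \<beta> where "\<beta> = g * F * real m / (real m + 1)"
    have gpos: "g > 0" using D2 by (simp add: g_def)
    have Fpos: "F > 0" using F1 by simp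
    have bpos: "\<beta> > 0" using gpos Fpos mpos by (simp add: \<beta>_def)
    have Fl: "F ^ l = (real m + 1) ^ l * real k * real D ^ (l+1) / real m ^ m"
    proof -
      have e1: "(real m powr (1/(real m + 1) - 1)) ^ l = 1 / real m ^ m"
      proof -
        have "(real m powr (1/(real m + 1) - 1)) ^ l = real m powr (real l * (1/(real m + 1) - 1))"
          using mpos by (simp add: powr_power)
        also have "real l * (1/(real m + 1) - 1) = - real m" using lm mpos by (simp add: field_simps)
        also have "real m powr (- real m) = 1 / real m ^ m" using mpos
          by (simp add: powr_minus_divide powr_realpow)
        finally show ?thesis .
      qed
      have e2: "(real k powr (1/real(2*k-2))) ^ l = real k"
      proof -
        have "(real k powr (1/real(2*k-2))) ^ l = real k powr (real l * (1/real(2*k-2)))"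
          using k by (simp add: powr_power)
        also have "real l * (1/real(2*k-2)) = 1" using k by (simp add: l_def)
        finally show ?thesis using k by simp
      qed
      have e3: "(real D powr (real(2*k-1)/real(2*k-2))) ^ l = real D ^ (l+1)"
      proof -
        have "(real D powr (real(2*k-1)/real(2*k-2))) ^ l = real D powr (real l * (real(2*k-1)/real(2*k-2)))"
          using D by (simp add: powr_power)
        also have "real l * (real(2*k-1)/real(2*k-2)) = real (l+1)" using k rl by (simp add: l_def m_def)
        also have "real D powr real (l+1) = real D^(l+1)" using D by (intro powr_realpow) simp
        finally show ?thesis .
      qed
      show ?thesis unfolding F_def C power_mult_distrib e1 e2 e3 by simp
    qed
    have key: "\<beta> ^ m * (g * F / (real m + 1)) = real (k*D*(D-1)^(2*k-2))"
    proof -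
      have "\<beta> ^ m * (g * F / (real m + 1)) = g ^ l * F ^ l * real m ^ m / (real m + 1) ^ l"
        unfolding \<beta>_def lm by (simp add: power_mult_distrib power_divide field_simps)
      also have "\<dots> = g ^ l * real k * real D ^ (l+1)" unfolding Fl using mpos by (simp add: field_simps)
      also have "\<dots> = real k * real D * (real D - 1) ^ l"
        using D2 unfolding g_def by (simp add: power_divide field_simps)
      finally show ?thesis using D2 by (simp add: l_def of_nat_diff)
    qed
    have "real (k*D*(D-1)^(2*k-2)) / \<beta>^(2*k-3) = g * F / (real m + 1)"
      using key bpos by (simp add: m_def field_simps)
    hence "\<beta> + real (k*D*(D-1)^(2*k-2)) / \<beta>^(2*k-3) = g * F"
      unfolding \<beta>_def using mpos by (simp add: field_simps)
    also have "g * F = F - F / real D" unfolding g_def using D2 by (simp add: field_simps)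
    also have "\<dots> \<le> F - 1" using FD D2 by (simp add: field_simps)
    also have "\<dots> \<le> of_int \<lfloor>F\<rfloor>" by linarith
    finally show ?thesis using F1 bpos by blast
  qed
qed


fun nb :: "('a \<Rightarrow> 'a \<Rightarrow> bool) \<Rightarrow> 'a \<Rightarrow> 'a \<Rightarrow> 'a list \<Rightarrow> bool" where
  "nb E a b [] = True"
| "nb E a b (c # q) = (E b c \<and> c \<noteq> a \<and> nb E b c q)"

lemma nbrs_card:
  assumes G: "finite_simple_graph V E" and deg: "\<forall>b\<in>V. degree V E b \<le> D" and b: "b \<in> V"
  shows "finite {c. E b c}" "card {c. E b c} \<le> D"
proof -
  have eq: "{c. E b c} = {u\<in>V. E b u}" using G unfolding finite_simple_graph_def by auto
  show "finite {c. E b c}" unfolding eq using G unfolding finite_simple_graph_def by auto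
  show "card {c. E b c} \<le> D" unfolding eq using deg b unfolding degree_def by auto
qed

lemma nb_card:
  assumes G: "finite_simple_graph V E" and deg: "\<forall>b\<in>V. degree V E b \<le> D" and ab: "E a b"
  shows "finite {q. length q = r \<and> nb E a b q} \<and> card {q. length q = r \<and> nb E a b q} \<le> (D-1)^r"
  using ab
proof (induction r arbitrary: a b)
  case 0
  have "{q. length q = 0 \<and> nb E a b q} = {[]}" by auto
  then show ?case by simp
next
  case (Suc r)
  have bV: "b \<in> V" using Suc.prems G unfolding finite_simple_graph_def by blast
  have ba: "E b a" using Suc.prems G unfolding finite_simple_graph_def by blast
  define N where "N = {c. E b c \<and> c \<noteq> a}"
  have N: "N = {c. E b c} - {a}" unfolding N_def by auto
  have finN: "finite N" unfolding N using nbrs_card[OF G deg bV] by simp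
  have cardN: "card N \<le> D - 1" unfolding N using nbrs_card[OF G deg bV] ba
    by (simp add: card_Diff_singleton)
  have IH: "\<And>c. c \<in> N \<Longrightarrow> finite {q. length q = r \<and> nb E b c q} \<and> card {q. length q = r \<and> nb E b c q} \<le> (D-1)^r"
    using Suc.IH unfolding N_def by blast
  have eq: "{q. length q = Suc r \<and> nb E a b q} = (\<lambda>(c,q). c # q) ` (SIGMA c:N. {q. length q = r \<and> nb E b c q})"
    unfolding N_def by (auto simp: length_Suc_conv)
  have fin: "finite (SIGMA c:N. {q. length q = r \<and> nb E b c q})" using finN IH by auto
  have "card {q. length q = Suc r \<and> nb E a b q} \<le> card (SIGMA c:N. {q. length q = r \<and> nb E b c q})"
    unfolding eq by (rule card_image_le[OF fin])
  also have "\<dots> = (\<Sum>c\<in>N. card {q. length q = r \<and> nb E b c q})" using finN IH by simp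
  also have "\<dots> \<le> (\<Sum>c\<in>N. (D-1)^r)" using IH by (intro sum_mono) auto
  also have "\<dots> = card N * (D-1)^r" by simp
  also have "\<dots> \<le> (D-1) * (D-1)^r" using cardN by simp
  finally show ?case unfolding eq using fin by auto
qed

definition st :: "('a \<Rightarrow> 'a \<Rightarrow> bool) \<Rightarrow> 'a \<Rightarrow> 'a list \<Rightarrow> bool" where
  "st E v q = (case q of [] \<Rightarrow> True | c # q' \<Rightarrow> E v c \<and> nb E v c q')"

lemma st_card:
  assumes G: "finite_simple_graph V E" and deg: "\<forall>b\<in>V. degree V E b \<le> D" and v: "v \<in> V"
  shows "finite {q. length q = Suc r \<and> st E v q} \<and> card {q. length q = Suc r \<and> st E v q} \<le> D * (D-1)^r"
proof -
  define N where "N = {c. E v c}"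
  have finN: "finite N" and cardN: "card N \<le> D" unfolding N_def using nbrs_card[OF G deg v] by auto
  have IH: "\<And>c. c \<in> N \<Longrightarrow> finite {q. length q = r \<and> nb E v c q} \<and> card {q. length q = r \<and> nb E v c q} \<le> (D-1)^r"
    unfolding N_def by (rule nb_card[OF G deg]) simp
  have eq: "{q. length q = Suc r \<and> st E v q} = (\<lambda>(c,q). c # q) ` (SIGMA c:N. {q. length q = r \<and> nb E v c q})"
    unfolding N_def st_def by (auto simp: length_Suc_conv)
  have fin: "finite (SIGMA c:N. {q. length q = r \<and> nb E v c q})" using finN IH by auto
  have "card {q. length q = Suc r \<and> st E v q} \<le> card (SIGMA c:N. {q. length q = r \<and> nb E v c q})"
    unfolding eq by (rule card_image_le[OF fin])
  also have "\<dots> = (\<Sum>c\<in>N. card {q. length q = r \<and> nb E v c q})" using finN IH by simp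
  also have "\<dots> \<le> (\<Sum>c\<in>N. (D-1)^r)" using IH by (intro sum_mono) auto
  also have "\<dots> = card N * (D-1)^r" by simp
  also have "\<dots> \<le> D * (D-1)^r" using cardN by simp
  finally show ?thesis unfolding eq using fin by auto
qed

lemma nb_intro:
  assumes "distinct (a # b # q)" "successively E (b # q)"
  shows "nb E a b q"
  using assms
proof (induction q arbitrary: a b)
  case Nil then show ?case by simp
next
  case (Cons c q)
  then show ?case by (auto simp: successively_Cons)
qed

lemma is_path_succ: "is_path V E p \<longleftrightarrow> p \<noteq> [] \<and> set p \<subseteq> V \<and> distinct p \<and> successively E p"
  unfolding is_path_def successively_conv_nth by auto



lemma sym_eq: "finite_simple_graph V E \<Longrightarrow> (\<lambda>x y. E y x) = E"
  unfolding finite_simple_graph_def by (intro ext) blast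

lemma paths_at_card:
  assumes G: "finite_simple_graph V E" and deg: "\<forall>b\<in>V. degree V E b \<le> D" and v: "v \<in> V"
    and j: "Suc j < n"
  shows "card {p. is_path V E p \<and> length p = n \<and> p ! j = v} \<le> D * (D-1)^(n-2)"
proof -
  define P where "P = {p. is_path V E p \<and> length p = n \<and> p ! j = v}"
  define S where "S = {ys. length ys = Suc (n-2-j) \<and> st E v ys}"
  define B where "B = (\<lambda>ys. {zs. length zs = j \<and> nb E (hd ys) v zs})"
  define h where "h = (\<lambda>p::'a list. (drop (Suc j) p, rev (take j p)))"
  have symE: "(\<lambda>x y. E y x) = E" by (rule sym_eq[OF G])
  have stS: "finite S \<and> card S \<le> D * (D-1)^(n-2-j)" unfolding S_def by (rule st_card[OF G deg v])
  have hdE: "\<And>ys. ys \<in> S \<Longrightarrow> E (hd ys) v"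
    using G unfolding S_def st_def finite_simple_graph_def by (auto split: list.splits)
  have Bb: "\<And>ys. ys \<in> S \<Longrightarrow> finite (B ys) \<and> card (B ys) \<le> (D-1)^j"
    unfolding B_def by (rule nb_card[OF G deg hdE])
  have finSig: "finite (Sigma S B)" using stS Bb by auto
  have dec: "\<And>p. p \<in> P \<Longrightarrow> p = take j p @ v # drop (Suc j) p"
    unfolding P_def using j by (auto intro: id_take_nth_drop)
  have inj: "inj_on h P"
  proof (rule inj_onI)
    fix p p' assume "p \<in> P" "p' \<in> P" "h p = h p'"
    then have "take j p = take j p'" "drop (Suc j) p = drop (Suc j) p'" unfolding h_def by auto
    then show "p = p'" using dec[OF \<open>p \<in> P\<close>] dec[OF \<open>p' \<in> P\<close>] by metis
  qed
  have sub: "h ` P \<subseteq> Sigma S B"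
  proof
    fix x assume "x \<in> h ` P"
    then obtain p where p: "p \<in> P" and x: "x = h p" by auto
    define xs where "xs = take j p"
    define ys where "ys = drop (Suc j) p"
    have pd: "p = xs @ v # ys" using dec[OF p] unfolding xs_def ys_def .
    have lp: "length p = n" using p unfolding P_def by auto
    have lxs: "length xs = j" using j lp unfolding xs_def by simp
    have lys: "length ys = Suc (n-2-j)" using j lp unfolding ys_def by simp
    then obtain c q where ys: "ys = c # q" by (cases ys) auto
    have dp: "distinct p" and sp: "successively E p" using p unfolding P_def is_path_succ by auto
    have d1: "distinct (v # c # q)" and s1: "successively E (v # c # q)"
      using dp sp unfolding pd ys by (auto simp: successively_append_iff)
    have "E v c" using s1 by simp
    moreover have "nb E v c q" by (rule nb_intro[OF d1]) (use s1 in \<open>simp add: successively_Cons\<close>)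
    ultimately have st1: "st E v ys" unfolding ys st_def by simp
    have d2: "distinct (c # v # rev xs)" using dp unfolding pd ys by auto
    have "successively E (xs @ [v])" using sp unfolding pd by (auto simp: successively_append_iff)
    hence "successively E (rev (xs @ [v]))" by (simp only: successively_rev symE)
    hence s2: "successively E (v # rev xs)" by simp
    have nb2: "nb E c v (rev xs)" by (rule nb_intro[OF d2 s2])
    show "x \<in> Sigma S B" unfolding x h_def S_def B_def
      using st1 lys nb2 lxs unfolding ys_def[symmetric] xs_def[symmetric] ys by simp
  qed
  have "card P \<le> card (Sigma S B)" by (rule card_inj_on_le[OF inj sub finSig])
  also have "\<dots> = (\<Sum>ys\<in>S. card (B ys))" using stS Bb by simp
  also have "\<dots> \<le> (\<Sum>ys\<in>S. (D-1)^j)" using Bb by (intro sum_mono) auto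
  also have "\<dots> = card S * (D-1)^j" by simp
  also have "\<dots> \<le> D * (D-1)^(n-2-j) * (D-1)^j" using stS by simp
  also have "\<dots> = D * (D-1)^(n-2)" using j by (simp add: power_add[symmetric])
  finally show ?thesis unfolding P_def .
qed



lemma is_path_mono: "is_path U E p \<Longrightarrow> U \<subseteq> X \<Longrightarrow> is_path X E p"
  unfolding is_path_def by auto

lemma is_path_rev: assumes "finite_simple_graph V E" "is_path U E p" shows "is_path U E (rev p)"
proof -
  have "successively E (rev p) = successively (\<lambda>x y. E y x) p" by simp
  also have "\<dots> = successively E p" by (simp only: sym_eq[OF assms(1)])
  finally show ?thesis using assms(2) unfolding is_path_succ by simp
qed

lemma three_vals:
  assumes "finite A" "card A \<le> 2" "x \<in> A" "y \<in> A" "z \<in> A" "x \<noteq> y" "z \<noteq> y"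
  shows "z = x"
proof (rule ccontr)
  assume "z \<noteq> x"
  then have "card {x,y,z} = 3" using assms by auto
  moreover have "card {x,y,z} \<le> card A" using assms by (intro card_mono) auto
  ultimately show False using assms by simp
qed

lemma alternating:
  assumes adj: "\<forall>i. Suc i < length P \<longrightarrow> f (P!i) \<noteq> f (P!Suc i)"
    and c2: "card (f ` set P) \<le> 2"
  shows "i < length P \<Longrightarrow> f (P!i) = f (P!(i mod 2))"
proof (induction i rule: less_induct)
  case (less i)
  show ?case
  proof (cases "i < 2")
    case True then show ?thesis by simp
  next
    case False
    then obtain i' where i: "i = Suc (Suc i')" by (metis add_2_eq_Suc less_iff_Suc_add not_less_eq)
    have a: "f (P!i) \<noteq> f (P!Suc i')" using adj less.prems i by auto
    have b: "f (P!i') \<noteq> f (P!Suc i')" using adj less.prems i by auto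
    have "f (P!i) = f (P!i')"
      by (rule three_vals[OF _ c2, of "f (P!i')" "f (P!Suc i')"])
         (use less.prems i a b in auto)
    also have "\<dots> = f (P!(i' mod 2))" using less.IH[of i'] less.prems i by simp
    finally show ?thesis using i by simp
  qed
qed



locale sk =
  fixes V :: "'a set" and E :: "'a \<Rightarrow> 'a \<Rightarrow> bool" and k D L :: nat and \<beta> :: real
  assumes G: "finite_simple_graph V E" and k2: "k \<ge> 2"
    and deg: "\<forall>b\<in>V. degree V E b \<le> D" and bpos: "\<beta> > 0"
    and num: "\<beta> + real (k*D*(D-1)^(2*k-2)) / \<beta>^(2*k-3) \<le> real L - real D"
begin

definition Col :: "'a set \<Rightarrow> ('a \<Rightarrow> nat) set" where
  "Col U = {c. (\<forall>x\<in>U. c x < L) \<and> (\<forall>x. x \<notin> U \<longrightarrow> c x = 0) \<and> star_k_coloring k U E c}"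

lemma finV: "finite V" using G unfolding finite_simple_graph_def by simp

lemma Col_finite: assumes "finite U" shows "finite (Col U)"
proof -
  have "Col U \<subseteq> {f. \<forall>x. (x \<in> U \<longrightarrow> f x \<in> {..<L}) \<and> (x \<notin> U \<longrightarrow> f x = 0)}"
    unfolding Col_def by auto
  then show ?thesis using finite_set_of_finite_funs[OF assms, of "{..<L}" 0] finite_subset by blast
qed

lemma Col_restrict:
  assumes c: "c \<in> Col U" and X: "X \<subseteq> U"
  shows "(\<lambda>x. if x \<in> X then c x else 0) \<in> Col X"
proof -
  let ?c = "\<lambda>x. if x \<in> X then c x else 0"
  have pr: "proper_coloring X E ?c" using c X unfolding Col_def star_k_coloring_def proper_coloring_def
    by (auto simp: subset_iff)
  have "card (?c ` set p) \<ge> 3" if p: "is_path X E p" "length p = 2 * k" for p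
  proof -
    have "set p \<subseteq> X" using p unfolding is_path_def by simp
    then have "?c ` set p = c ` set p" by (auto simp: subset_iff)
    moreover have "is_path U E p" using is_path_mono[OF p(1) X] .
    ultimately show ?thesis using c p unfolding Col_def star_k_coloring_def by auto
  qed
  then show ?thesis using c X pr unfolding Col_def star_k_coloring_def by auto
qed

lemma Col_empty: "card (Col {}) = 1"
proof -
  have sk: "star_k_coloring k {} E c" for c :: "'a \<Rightarrow> nat"
    unfolding star_k_coloring_def proper_coloring_def is_path_def by simp
  have "Col {} = {\<lambda>_. 0}" unfolding Col_def using sk by (auto intro!: ext)
  then show ?thesis by simp
qed

lemma iter:
  assumes IH: "\<And>U'. U' \<subseteq> V \<Longrightarrow> card U' < card U \<Longrightarrow> (\<forall>v\<in>V-U'. \<beta> * card (Col U') \<le> card (Col (insert v U')))"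
    and U: "U \<subseteq> V" and T: "T \<subseteq> U"
  shows "\<beta> ^ card T * card (Col (U - T)) \<le> card (Col U)"
proof -
  have "finite T" using finite_subset[OF subset_trans[OF T U] finV] .
  then show ?thesis using T
  proof (induction T rule: finite_induct)
    case empty then show ?case by simp
  next
    case (insert x T)
    define U' where "U' = U - insert x T"
    have U'V: "U' \<subseteq> V" using U unfolding U'_def by auto
    have fU: "finite U" using finite_subset[OF U finV] .
    have cU': "card U' < card U" unfolding U'_def using insert.prems fU
      by (intro psubset_card_mono) auto
    have xV: "x \<in> V - U'" using insert.prems U unfolding U'_def by auto
    have ins: "insert x U' = U - T" using insert.prems insert.hyps unfolding U'_def by auto
    have step: "\<beta> * card (Col U') \<le> card (Col (U - T))" using IH[OF U'V cU'] xV unfolding ins[symmetric] by blast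
    have "\<beta> ^ card (insert x T) * card (Col (U - insert x T)) = \<beta>^card T * (\<beta> * card (Col U'))"
      using insert.hyps unfolding U'_def by simp
    also have "\<dots> \<le> \<beta>^card T * card (Col (U - T))" using step bpos by (intro mult_left_mono) auto
    also have "\<dots> \<le> card (Col U)" using insert by auto
    finally show ?case .
  qed
qed

end


context sk begin

lemma step:
  assumes IH: "\<And>U'. U' \<subseteq> V \<Longrightarrow> card U' < card U \<Longrightarrow> (\<forall>v\<in>V-U'. \<beta> * card (Col U') \<le> card (Col (insert v U')))"
    and U: "U \<subseteq> V" and v: "v \<in> V" "v \<notin> U"
  shows "\<beta> * card (Col U) \<le> card (Col (insert v U))"
proof -
  define W where "W = insert v U"
  define m where "m = 2*k-3"
  define A where "A = k*D*(D-1)^(2*k-2)"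
  have fU: "finite U" using finite_subset[OF U finV] .
  have WV: "W \<subseteq> V" using U v unfolding W_def by auto
  have fW: "finite W" using finite_subset[OF WV finV] .
  have symE: "\<And>x y. E x y \<Longrightarrow> E y x" and irr: "\<And>x. \<not> E x x"
    and EV: "\<And>x y. E x y \<Longrightarrow> x \<in> V \<and> y \<in> V"
    using G unfolding finite_simple_graph_def by blast+
  define Allowed where "Allowed d = {a. a < L \<and> (\<forall>u\<in>U. E v u \<longrightarrow> a \<noteq> d u)}" for d :: "'a \<Rightarrow> nat"
  define PE where "PE = Sigma (Col U) Allowed"
  define g where "g = (\<lambda>(d::'a \<Rightarrow> nat, a::nat). d(v:=a))"
  have A0: "real A / \<beta>^m \<ge> 0" using bpos by simp
  have LD: "real L - real D \<ge> \<beta>" using num A0 unfolding A_def m_def by linarith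
  hence DL: "D \<le> L" using bpos by linarith
  hence rLD: "real (L - D) = real L - real D" by simp
  have finAl: "finite (Allowed d)" for d unfolding Allowed_def by simp
  have cardAl: "L - D \<le> card (Allowed d)" for d
  proof -
    have fN: "finite {u. E v u}" and cN: "card {u. E v u} \<le> D" using nbrs_card[OF G deg v(1)] by auto
    have c1: "card (d ` {u. E v u}) \<le> D" using card_image_le[OF fN, of d] cN by linarith
    have "L - D \<le> card {..<L} - card (d ` {u. E v u})" using c1 by simp
    also have "\<dots> \<le> card ({..<L} - d ` {u. E v u})" by (rule diff_card_le_card_Diff) (use fN in auto)
    also have "\<dots> \<le> card (Allowed d)" by (rule card_mono[OF finAl]) (auto simp: Allowed_def)
    finally show ?thesis .
  qed
  have finColU: "finite (Col U)" by (rule Col_finite[OF fU])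
  have finColW: "finite (Col W)" by (rule Col_finite[OF fW])
  have finPE: "finite PE" unfolding PE_def using finColU finAl by auto
  have cardPE: "card (Col U) * (L - D) \<le> card PE"
  proof -
    have "card PE = (\<Sum>d\<in>Col U. card (Allowed d))" unfolding PE_def using finColU finAl by simp
    moreover have "(\<Sum>d\<in>Col U. L - D) \<le> (\<Sum>d\<in>Col U. card (Allowed d))" using cardAl by (intro sum_mono) auto
    ultimately show ?thesis by simp
  qed
  have injg: "inj_on g PE"
  proof (rule inj_onI)
    fix x y assume x: "x \<in> PE" and y: "y \<in> PE" and eq: "g x = g y"
    obtain d a where xd: "x = (d,a)" by (cases x)
    obtain d' a' where yd: "y = (d',a')" by (cases y)
    have d: "d \<in> Col U" "d' \<in> Col U" using x y unfolding xd yd PE_def by auto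
    have e1: "d(v:=a) = d'(v:=a')" using eq unfolding xd yd g_def by simp
    have "a = a'" using fun_cong[OF e1, of v] by simp
    moreover have "d = d'"
    proof
      fix z show "d z = d' z"
      proof (cases "z = v")
        case True then show ?thesis using d v unfolding Col_def by auto
      next
        case False then show ?thesis using fun_cong[OF e1, of z] by simp
      qed
    qed
    ultimately show "x = y" unfolding xd yd by simp
  qed
  have ColW_sub: "Col W \<subseteq> g ` PE"
  proof
    fix c assume c: "c \<in> Col W"
    define d where "d = (\<lambda>x. if x \<in> U then c x else 0)"
    have dC: "d \<in> Col U" unfolding d_def by (rule Col_restrict[OF c]) (auto simp: W_def)
    have "c v \<in> Allowed d"
    proof -
      have "c v < L" using c unfolding Col_def W_def by auto
      moreover have "c v \<noteq> d u" if "u \<in> U" "E v u" for u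
        using c that unfolding Col_def star_k_coloring_def proper_coloring_def d_def W_def by auto
      ultimately show ?thesis unfolding Allowed_def by auto
    qed
    moreover have "c = d(v := c v)"
    proof
      fix x show "c x = (d(v := c v)) x" using c unfolding d_def Col_def W_def by auto
    qed
    ultimately show "c \<in> g ` PE" using dC unfolding PE_def g_def by (auto intro!: image_eqI[of _ _ "(d, c v)"])
  qed
  define Pi where "Pi = {p. is_path W E p \<and> length p = 2*k \<and> (\<exists>j<k. p!j = v)}"
  define e where "e p = (if v = p!0 \<or> v = p!1 then 2*k-2 else 0)" for p :: "'a list"
  define S where "S p = set p - {p ! e p, p ! Suc (e p)}" for p :: "'a list"
  have Pif: "even (e p) \<and> Suc (e p) < 2*k \<and> v \<in> S p \<and> card (S p - {v}) = m \<and> S p - {v} \<subseteq> U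
      \<and> W - S p = U - (S p - {v}) \<and> p ! e p \<in> W - S p \<and> p ! Suc (e p) \<in> W - S p" if p: "p \<in> Pi" for p
  proof -
    have dp: "distinct p" and lp: "length p = 2*k" and sp: "set p \<subseteq> W"
      using p unfolding Pi_def is_path_def by auto
    obtain j where j: "j < k" "p!j = v" using p unfolding Pi_def by auto
    have vin: "v \<in> set p" using j lp by (metis nth_mem less_le_trans mult_2 le_add1 order_less_le_trans)
    have ev: "even (e p)" and se: "Suc (e p) < 2*k" using k2 unfolding e_def by auto
    have ne: "p ! e p \<noteq> p ! Suc (e p)" using dp se lp by (simp add: nth_eq_iff_index_eq)
    have vS: "v \<in> S p"
    proof (cases "v = p!0 \<or> v = p!1")
      case True
      then have ee: "e p = 2*k-2" unfolding e_def by simp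
      obtain i where i: "i < 2" "p!i = v" using True by (metis zero_less_numeral one_less_numeral_iff semiring_norm(76))
      have "p!i \<noteq> p!(2*k-2)" "p!i \<noteq> p!(2*k-1)" using dp lp k2 i by (auto simp: nth_eq_iff_index_eq)
      moreover have "Suc (2*k-2) = 2*k-1" using k2 by simp
      ultimately show ?thesis unfolding S_def ee using vin i by auto
    next
      case False
      then show ?thesis unfolding S_def e_def using vin by auto
    qed
    have kept: "{p ! e p, p ! Suc (e p)} \<subseteq> set p" using se lp by auto
    have "card (S p) = 2*k - 2" unfolding S_def using card_Diff_subset[OF _ kept] ne distinct_card[OF dp] lp
      by simp
    hence cS: "card (S p - {v}) = m" using vS unfolding m_def by (simp add: card_Diff_singleton)
    have sub: "S p - {v} \<subseteq> U" using sp unfolding S_def W_def by auto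
    have eqW: "W - S p = U - (S p - {v})" using vS v unfolding W_def by auto
    have "p ! e p \<in> W - S p" "p ! Suc (e p) \<in> W - S p" using kept sp unfolding S_def by auto
    then show ?thesis using ev se vS cS sub eqW by blast
  qed
  have bound_each: "real (card (Col (W - S p))) * \<beta>^m \<le> card (Col U)" if p: "p \<in> Pi" for p
  proof -
    have "\<beta> ^ card (S p - {v}) * card (Col (U - (S p - {v}))) \<le> card (Col U)"
      by (rule iter[OF IH U]) (use Pif[OF p] in auto)
    then show ?thesis using Pif[OF p] by (simp add: mult.commute)
  qed
  have finPi: "finite Pi"
  proof -
    have "Pi \<subseteq> {xs. set xs \<subseteq> V \<and> length xs = 2*k}" unfolding Pi_def is_path_def using WV by auto
    then show ?thesis using finite_lists_length_eq[OF finV] finite_subset by blast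
  qed
  have cardPi: "card Pi \<le> A"
  proof -
    define Q where "Q j = {p. is_path V E p \<and> length p = 2*k \<and> p ! j = v}" for j
    have finQ: "finite (Q j)" for j
    proof -
      have "Q j \<subseteq> {xs. set xs \<subseteq> V \<and> length xs = 2*k}" unfolding Q_def is_path_def by auto
      then show ?thesis using finite_lists_length_eq[OF finV] finite_subset by blast
    qed
    have "Pi \<subseteq> (\<Union>j\<in>{..<k}. Q j)" unfolding Pi_def Q_def using is_path_mono WV by blast
    hence "card Pi \<le> card (\<Union>j\<in>{..<k}. Q j)" by (rule card_mono[rotated]) (use finQ in auto)
    also have "\<dots> \<le> (\<Sum>j\<in>{..<k}. card (Q j))" by (rule card_UN_le) simp
    also have "\<dots> \<le> (\<Sum>j\<in>{..<k}. D * (D-1)^(2*k-2))"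
    proof (rule sum_mono)
      fix j assume "j \<in> {..<k}"
      then have "Suc j < 2*k" by simp
      from paths_at_card[OF G deg v(1) this] show "card (Q j) \<le> D * (D-1)^(2*k-2)" unfolding Q_def .
    qed
    also have "\<dots> = A" unfolding A_def by simp
    finally show ?thesis .
  qed
  define Ev where "Ev p = {p!i | i. i < length p \<and> even i}" for p :: "'a list"
  define recon where "recon p \<psi> = (\<lambda>x. if x \<in> set p then (if x \<in> Ev p then \<psi> (p ! e p) else \<psi> (p ! Suc (e p))) else \<psi> x)"
    for p :: "'a list" and \<psi> :: "'a \<Rightarrow> nat"
  have Bad_sub: "g ` PE - Col W \<subseteq> (\<Union>p\<in>Pi. recon p ` Col (W - S p))"
  proof
    fix \<phi> assume "\<phi> \<in> g ` PE - Col W"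
    then obtain d a where da: "(d,a) \<in> PE" and \<phi>: "\<phi> = d(v:=a)" and nC: "\<phi> \<notin> Col W"
      unfolding g_def by auto
    have dC: "d \<in> Col U" and aA: "a \<in> Allowed d" using da unfolding PE_def by auto
    have vals: "\<forall>x\<in>W. \<phi> x < L" using dC aA unfolding \<phi> Col_def Allowed_def W_def by auto
    have zer: "\<forall>x. x \<notin> W \<longrightarrow> \<phi> x = 0" using dC unfolding \<phi> Col_def W_def by auto
    have dprop: "proper_coloring U E d" using dC unfolding Col_def star_k_coloring_def by auto
    have prp: "proper_coloring W E \<phi>"
      unfolding proper_coloring_def
    proof (intro ballI impI)
      fix x y assume xy: "x \<in> W" "y \<in> W" "E x y"
      show "\<phi> x \<noteq> \<phi> y"
      proof (cases "x = v")
        case True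
        then have "y \<noteq> v" using irr xy by auto
        then show ?thesis using True xy aA unfolding \<phi> Allowed_def W_def by auto
      next
        case False
        show ?thesis
        proof (cases "y = v")
          case True
          then show ?thesis using False xy aA symE unfolding \<phi> Allowed_def W_def by fastforce
        next
          case False2: False
          then show ?thesis using False xy dprop unfolding \<phi> proper_coloring_def W_def by auto
        qed
      qed
    qed
    obtain p where p: "is_path W E p" "length p = 2*k" and c3: "\<not> card (\<phi> ` set p) \<ge> 3"
      using nC vals zer prp unfolding Col_def star_k_coloring_def by auto
    have vp: "v \<in> set p"
    proof (rule ccontr)
      assume nv: "v \<notin> set p"
      have "set p \<subseteq> U" using p nv unfolding is_path_def W_def by auto
      then have pU: "is_path U E p" using p unfolding is_path_def by auto
      have "\<phi> ` set p = d ` set p" using nv unfolding \<phi> by auto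
      then show False using c3 dC pU p unfolding Col_def star_k_coloring_def by auto
    qed
    obtain j where j: "j < length p" "p ! j = v" using vp by (auto simp: in_set_conv_nth)
    define P where "P = (if j < k then p else rev p)"
    have PW: "is_path W E P" unfolding P_def using p is_path_rev[OF G] by auto
    have lP: "length P = 2*k" unfolding P_def using p by auto
    have setP: "set P = set p" unfolding P_def by auto
    have PPi: "P \<in> Pi"
    proof (cases "j < k")
      case True then show ?thesis unfolding Pi_def P_def using p j by auto
    next
      case False
      have "rev p ! (2*k - 1 - j) = v" using j p False by (simp add: rev_nth)
      moreover have "2*k - 1 - j < k" using False j p by simp
      ultimately show ?thesis unfolding Pi_def P_def using p is_path_rev[OF G p(1)] False by auto
    qed
    have c2: "card (\<phi> ` set P) \<le> 2" using c3 setP by simp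
    have adj: "\<forall>i. Suc i < length P \<longrightarrow> \<phi> (P!i) \<noteq> \<phi> (P!Suc i)"
    proof (intro allI impI)
      fix i assume i: "Suc i < length P"
      have "E (P!i) (P!Suc i)" using PW i unfolding is_path_def by auto
      moreover have "P!i \<in> W" "P!Suc i \<in> W" using PW i unfolding is_path_def by (auto dest: nth_mem)
      ultimately show "\<phi> (P!i) \<noteq> \<phi> (P!Suc i)" using prp unfolding proper_coloring_def by auto
    qed
    have alt: "\<And>i. i < length P \<Longrightarrow> \<phi> (P!i) = \<phi> (P!(i mod 2))" by (rule alternating[OF adj c2])
    note PF = Pif[OF PPi]
    define \<psi> where "\<psi> = (\<lambda>x. if x \<in> W - S P then \<phi> x else 0)"
    have WSU: "W - S P \<subseteq> U" using PF by auto
    have "\<psi> = (\<lambda>x. if x \<in> W - S P then d x else 0)"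
      unfolding \<psi>_def \<phi> using PF by (auto intro!: ext)
    hence \<psi>C: "\<psi> \<in> Col (W - S P)" using Col_restrict[OF dC WSU] by simp
    have dPP: "distinct P" using PW unfolding is_path_def by auto
    have e0: "\<psi> (P ! e P) = \<phi> (P!0)"
    proof -
      have "\<psi> (P ! e P) = \<phi> (P ! e P)" using PF unfolding \<psi>_def by auto
      also have "\<dots> = \<phi> (P!0)" using alt[of "e P"] PF lP by auto
      finally show ?thesis .
    qed
    have e1: "\<psi> (P ! Suc (e P)) = \<phi> (P!1)"
    proof -
      have "\<psi> (P ! Suc (e P)) = \<phi> (P ! Suc (e P))" using PF unfolding \<psi>_def by auto
      also have "\<dots> = \<phi> (P!1)" using alt[of "Suc (e P)"] PF lP by (auto simp: odd_iff_mod_2_eq_one)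
      finally show ?thesis .
    qed
    have "\<phi> = recon P \<psi>"
    proof
      fix x show "\<phi> x = recon P \<psi> x"
      proof (cases "x \<in> set P")
        case True
        then obtain i where i: "i < length P" "x = P!i" by (auto simp: in_set_conv_nth)
        show ?thesis
        proof (cases "even i")
          case True
          then have "x \<in> Ev P" unfolding Ev_def using i by auto
          then show ?thesis unfolding recon_def using e0 alt[OF i(1)] i True \<open>x \<in> set P\<close>
            by (simp add: even_iff_mod_2_eq_zero)
        next
          case False
          have "x \<notin> Ev P"
          proof
            assume "x \<in> Ev P"
            then obtain i' where "i' < length P" "even i'" "x = P!i'" unfolding Ev_def by auto
            then show False using i False dPP by (auto simp: nth_eq_iff_index_eq)
          qed
          then show ?thesis unfolding recon_def using e1 alt[OF i(1)] i False \<open>x \<in> set P\<close>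
            by (simp add: odd_iff_mod_2_eq_one)
        qed
      next
        case False
        then have "x \<notin> S P" unfolding S_def by auto
        then show ?thesis unfolding recon_def \<psi>_def using False zer by auto
      qed
    qed
    then show "\<phi> \<in> (\<Union>p\<in>Pi. recon p ` Col (W - S p))" using PPi \<psi>C by blast
  qed
  define NU where "NU = real (card (Col U))"
  have finR: "finite (recon p ` Col (W - S p))" for p
    using Col_finite[of "W - S p"] fW by auto
  have cardBad: "real (card (g ` PE - Col W)) \<le> real A * NU / \<beta>^m"
  proof -
    have "card (g ` PE - Col W) \<le> card (\<Union>p\<in>Pi. recon p ` Col (W - S p))"
      by (rule card_mono[OF _ Bad_sub]) (use finPi finR in auto)
    also have "\<dots> \<le> (\<Sum>p\<in>Pi. card (recon p ` Col (W - S p)))" by (rule card_UN_le[OF finPi])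
    also have "\<dots> \<le> (\<Sum>p\<in>Pi. card (Col (W - S p)))"
      by (intro sum_mono card_image_le) (use Col_finite fW in auto)
    finally have "real (card (g ` PE - Col W)) \<le> (\<Sum>p\<in>Pi. real (card (Col (W - S p))))"
      by (simp flip: of_nat_sum)
    also have "\<dots> \<le> (\<Sum>p\<in>Pi. NU / \<beta>^m)"
    proof (rule sum_mono)
      fix p assume "p \<in> Pi"
      from bound_each[OF this] show "real (card (Col (W - S p))) \<le> NU / \<beta>^m"
        unfolding NU_def using bpos by (simp add: field_simps)
    qed
    also have "\<dots> = real (card Pi) * (NU / \<beta>^m)" by simp
    also have "\<dots> \<le> real A * (NU / \<beta>^m)"
      using cardPi bpos by (intro mult_right_mono) (auto simp: NU_def)
    finally show ?thesis by simp
  qed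
  have "card (g ` PE) = card PE" by (rule card_image[OF injg])
  moreover have "card (g ` PE - Col W) = card (g ` PE) - card (Col W)"
    by (rule card_Diff_subset[OF finColW ColW_sub])
  moreover have "card (Col W) \<le> card (g ` PE)" by (rule card_mono[OF _ ColW_sub]) (use finPE in auto)
  ultimately have eqW: "real (card (Col W)) = real (card PE) - real (card (g ` PE - Col W))" by simp
  have "real (card PE) \<ge> NU * (real L - real D)"
    using cardPE rLD unfolding NU_def by (metis of_nat_le_iff of_nat_mult)
  hence h1: "real (card (Col W)) \<ge> NU * (real L - real D) - real A * NU / \<beta>^m" using eqW cardBad by linarith
  have h2: "NU * (real L - real D) - real A * NU / \<beta>^m = NU * (real L - real D - real A / \<beta>^m)"
    by (simp add: algebra_simps)
  have h3: "NU * \<beta> \<le> NU * (real L - real D - real A / \<beta>^m)" using num unfolding A_def m_def NU_def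
    by (intro mult_left_mono) (auto simp: algebra_simps)
  show ?thesis using h1 h2 h3 unfolding W_def NU_def by (simp add: mult.commute)
qed

end
context sk begin

lemma main: "U \<subseteq> V \<Longrightarrow> v \<in> V - U \<Longrightarrow> \<beta> * card (Col U) \<le> card (Col (insert v U))"
proof (induction "card U" arbitrary: U v rule: less_induct)
  case less
  show ?case
  proof (rule step)
    show "\<And>U'. U' \<subseteq> V \<Longrightarrow> card U' < card U \<Longrightarrow> (\<forall>v\<in>V-U'. \<beta> * card (Col U') \<le> card (Col (insert v U')))"
      using less.hyps by blast
  qed (use less.prems in auto)
qed

lemma exists_col: "\<exists>c. c \<in> Col V"
proof -
  have "\<beta> ^ card V * card (Col (V - V)) \<le> card (Col V)"
    by (rule iter) (use main in auto)
  hence "0 < card (Col V)" using Col_empty bpos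
    by (metis Diff_cancel mult.right_neutral of_nat_0_less_iff of_nat_1 order_less_le_trans zero_less_power)
  then show ?thesis by (metis card.empty ex_in_conv less_irrefl)
qed

end

theorem theorem10:
  fixes V :: "'a set" and E :: "'a \<Rightarrow> 'a \<Rightarrow> bool" and k :: nat
  assumes "k \<ge> 2"
    and "finite_simple_graph V E"
    and "V \<noteq> {}"
    and "max_degree V E \<ge> 1"
  shows "\<exists>c :: 'a \<Rightarrow> nat. star_k_coloring k V E c \<and>
           real (card (c ` V)) \<le>
             C_const (2 * k - 2) * real k powr (1 / real (2 * k - 2))
               * real (max_degree V E) powr (real (2 * k - 1) / real (2 * k - 2))
             + real (max_degree V E)"
proof -
  define D where "D = max_degree V E"
  define F where "F = C_const (2*k-2) * real k powr (1/real(2*k-2)) * real D powr (real(2*k-1)/real(2*k-2))"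
  have finV: "finite V" using assms(2) unfolding finite_simple_graph_def by simp
  have deg: "\<forall>b\<in>V. degree V E b \<le> D" unfolding D_def max_degree_def using finV by auto
  obtain \<beta> where F1: "F \<ge> 1" and bpos: "\<beta> > 0"
    and nm: "\<beta> + real (k*D*(D-1)^(2*k-2)) / \<beta>^(2*k-3) \<le> of_int \<lfloor>F\<rfloor>"
    using numeric[OF assms(1), of D] assms(4) unfolding F_def D_def by auto
  define L where "L = D + nat \<lfloor>F\<rfloor>"
  have fl: "real (nat \<lfloor>F\<rfloor>) = of_int \<lfloor>F\<rfloor>" using F1 by simp
  have LF: "real L - real D = of_int \<lfloor>F\<rfloor>" unfolding L_def using fl by simp
  interpret sk V E k D L \<beta>
    by unfold_locales (use assms(1,2) deg bpos nm LF in auto)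
  obtain c where c: "c \<in> Col V" using exists_col by blast
  have sk: "star_k_coloring k V E c" using c unfolding Col_def by auto
  have "c ` V \<subseteq> {..<L}" using c unfolding Col_def by auto
  hence "card (c ` V) \<le> L" using card_mono[of "{..<L}" "c ` V"] by simp
  hence "real (card (c ` V)) \<le> real L" by simp
  also have "\<dots> \<le> F + real D" using LF by linarith
  finally show ?thesis using sk unfolding F_def D_def by blast
qed

end
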